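(* Let $\frac{1}{2}\leq \alpha <1$ and let $G$ be a graph with $n$ vertices, $m$ edges, maximum degree $\Delta$ and minimum degree $\delta$. If $1\leq k\leq n-1$, then $$S_k(A_{\alpha}(G))\leq \frac{2\alpha km}{n}+\sqrt{\frac{k(n-k)}{n}\left(2m(1-\alpha)^2+\frac{\alpha^2n}{4}(\Delta-\delta)^2\right)}.$$
   Context: All graphs are simple and undirected. $A_{\alpha}(G)=\alpha D(G)+(1-\alpha)A(G)$, where $A(G)$ is the adjacency matrix and $D(G)$ the diagonal degree matrix. For a real symmetric matrix $M$ with eigenvalues $\lambda_1(M)\geq\cdots\geq\lambda_n(M)$, $S_k(M)=\sum_{i=1}^k\lambda_i(M)$. *)

theory Defs
  imports Complex_Main "Jordan_Normal_Form.Char_Poly"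
begin

text \<open>Eigenvalues of a real square matrix M (n x n), listed with multiplicity in
non-increasing order: the unique non-increasing list whose linear factors multiply to the
characteristic polynomial (exists and is unique for real symmetric matrices).\<close>
definition eigvals_desc :: "real mat \<Rightarrow> real list" where
  "eigvals_desc M = (SOME ls. length ls = dim_row M \<and> sorted_wrt (\<ge>) ls \<and>
      char_poly M = (\<Prod>a\<leftarrow>ls. [:-a, 1:]))"

definition S_k :: "nat \<Rightarrow> real mat \<Rightarrow> real" where
  "S_k k M = sum_list (take k (eigvals_desc M))"

definition simple_graph :: "nat \<Rightarrow> (nat \<Rightarrow> nat \<Rightarrow> bool) \<Rightarrow> bool" where
  "simple_graph n E \<longleftrightarrow> (\<forall>i<n. \<forall>j<n. E i j \<longleftrightarrow> E j i) \<and> (\<forall>i<n. \<not> E i i)"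

definition degree :: "nat \<Rightarrow> (nat \<Rightarrow> nat \<Rightarrow> bool) \<Rightarrow> nat \<Rightarrow> nat" where
  "degree n E i = card {j. j < n \<and> E i j}"

definition num_edges :: "nat \<Rightarrow> (nat \<Rightarrow> nat \<Rightarrow> bool) \<Rightarrow> nat" where
  "num_edges n E = card {(i, j). i < j \<and> j < n \<and> E i j}"

definition max_degree :: "nat \<Rightarrow> (nat \<Rightarrow> nat \<Rightarrow> bool) \<Rightarrow> nat" where
  "max_degree n E = Max (degree n E ` {0..<n})"

definition min_degree :: "nat \<Rightarrow> (nat \<Rightarrow> nat \<Rightarrow> bool) \<Rightarrow> nat" where
  "min_degree n E = Min (degree n E ` {0..<n})"

definition adj_mat :: "nat \<Rightarrow> (nat \<Rightarrow> nat \<Rightarrow> bool) \<Rightarrow> real mat" where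
  "adj_mat n E = mat n n (\<lambda>(i, j). if E i j then 1 else 0)"

definition deg_mat :: "nat \<Rightarrow> (nat \<Rightarrow> nat \<Rightarrow> bool) \<Rightarrow> real mat" where
  "deg_mat n E = mat n n (\<lambda>(i, j). if i = j then real (degree n E i) else 0)"

definition A_alpha :: "real \<Rightarrow> nat \<Rightarrow> (nat \<Rightarrow> nat \<Rightarrow> bool) \<Rightarrow> real mat" where
  "A_alpha \<alpha> n E = \<alpha> \<cdot>\<^sub>m deg_mat n E + (1 - \<alpha>) \<cdot>\<^sub>m adj_mat n E"

end

theory Submission imports Defs "Jordan_Normal_Form.Schur_Decomposition" begin

interpretation rp: map_poly_comm_ring_hom "of_real :: real \<Rightarrow> complex" ..

lemma map_poly_of_real_inj:
  assumes "map_poly (of_real::real\<Rightarrow>complex) p = map_poly of_real q" shows "p = q"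
proof (rule poly_eqI)
  fix i
  have "coeff (map_poly (of_real::real\<Rightarrow>complex) p) i = coeff (map_poly of_real q) i" using assms by simp
  then show "coeff p i = coeff q i" by (simp add: coeff_map_poly)
qed

lemma cnj_sq_helper: "(v::complex) * cnj v = (complex_of_real (cmod v))^2"
  using complex_norm_square[of v] by simp

lemma real_sym_eig_real:
  fixes M :: "real mat"
  assumes M: "M \<in> carrier_mat n n" and sym: "\<And>i j. i < n \<Longrightarrow> j < n \<Longrightarrow> M $$ (i,j) = M $$ (j,i)"
    and ev: "eigenvalue (map_mat complex_of_real M) a"
  shows "a = of_real (Re a)"
proof -
  let ?C = "map_mat complex_of_real M"
  from ev obtain v where "eigenvector ?C v a" unfolding eigenvalue_def by auto
  hence v: "v \<in> carrier_vec n" and v0: "v \<noteq> 0\<^sub>v n" and Cv: "?C *\<^sub>v v = a \<cdot>\<^sub>v v"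
    unfolding eigenvector_def using M by auto
  have Cvi: "(?C *\<^sub>v v) $ i = (\<Sum>j<n. of_real (M $$ (i,j)) * v $ j)" if "i < n" for i
    using that M v by (auto simp: scalar_prod_def intro!: sum.cong)
  define s where "s = (\<Sum>i<n. cnj (v $ i) * (?C *\<^sub>v v) $ i)"
  define N where "N = (\<Sum>i<n. cnj (v $ i) * v $ i)"
  have sN: "s = a * N" unfolding s_def N_def Cv using v
    by (auto simp: sum_distrib_left intro!: sum.cong)
  have s2: "s = (\<Sum>i<n. \<Sum>j<n. cnj (v $ i) * of_real (M $$ (i,j)) * v $ j)"
    unfolding s_def by (auto simp: Cvi sum_distrib_left mult.assoc intro!: sum.cong)
  have "cnj s = (\<Sum>i<n. \<Sum>j<n. v $ i * of_real (M $$ (i,j)) * cnj (v $ j))"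
    unfolding s2 by simp
  also have "\<dots> = (\<Sum>j<n. \<Sum>i<n. v $ i * of_real (M $$ (i,j)) * cnj (v $ j))"
    by (rule sum.swap)
  also have "\<dots> = s" unfolding s2
    by (auto simp: sym mult.commute mult.left_commute intro!: sum.cong)
  finally have cs: "cnj s = s" .
  have Nr: "N = of_real (\<Sum>i<n. (cmod (v $ i))^2)"
    unfolding N_def of_real_sum of_real_power
    by (intro sum.cong refl) (simp add: cnj_sq_helper[symmetric] mult.commute)
  obtain i where i: "i < n" "v $ i \<noteq> 0" using v v0 by (metis eq_vecI carrier_vecD index_zero_vec)
  have "(\<Sum>i<n. (cmod (v $ i))^2) > 0"
    by (rule sum_pos2[of _ i]) (use i in auto)
  hence N0: "N \<noteq> 0" unfolding Nr by (metis of_real_eq_0_iff less_irrefl)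
  have cN: "cnj N = N" unfolding Nr by simp
  have "cnj a * N = a * N" using cs sN cN by (metis complex_cnj_mult)
  hence ca: "cnj a = a" using N0 by simp
  have "Im (cnj a) = Im a" using ca by simp
  hence "Im a = 0" by simp
  thus ?thesis by (intro complex_eqI) auto
qed

lemma real_sym_char_poly_split:
  fixes M :: "real mat"
  assumes M: "M \<in> carrier_mat n n" and sym: "\<And>i j. i < n \<Longrightarrow> j < n \<Longrightarrow> M $$ (i,j) = M $$ (j,i)"
  shows "\<exists>ls. length ls = n \<and> char_poly M = (\<Prod>a\<leftarrow>ls. [:-a, 1:])"
proof -
  let ?C = "map_mat complex_of_real M"
  have C: "?C \<in> carrier_mat n n" using M by auto
  obtain as where cp: "char_poly ?C = (\<Prod>a\<leftarrow>as. [:-a, 1:])" and len: "length as = n"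
    using char_poly_factorized[OF C] by blast
  have re: "a = of_real (Re a)" if "a \<in> set as" for a
  proof (rule real_sym_eig_real[OF M sym])
    show "eigenvalue ?C a" unfolding eigenvalue_root_char_poly[OF C] cp
      using linear_poly_root[OF that] .
  qed auto
  have "map_poly of_real (\<Prod>a\<leftarrow>map Re as. [:-a, 1:]) = (\<Prod>a\<leftarrow>as. [:-a, 1:])"
    unfolding rp.hom_prod_list map_map o_def
    by (intro arg_cong[of _ _ prod_list] map_cong refl) (subst (2) re, auto)
  also have "\<dots> = map_poly of_real (char_poly M)"
    unfolding cp[symmetric] by (rule of_real_hom.char_poly_hom[OF M])
  finally have "char_poly M = (\<Prod>a\<leftarrow>map Re as. [:-a, 1:])"
    by (intro map_poly_of_real_inj) simp
  thus ?thesis using len by (intro exI[of _ "map Re as"]) simp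
qed

lemma eigvals_desc_props:
  fixes M :: "real mat"
  assumes M: "M \<in> carrier_mat n n" and sym: "\<And>i j. i < n \<Longrightarrow> j < n \<Longrightarrow> M $$ (i,j) = M $$ (j,i)"
  shows "length (eigvals_desc M) = n \<and> char_poly M = (\<Prod>a\<leftarrow>eigvals_desc M. [:-a, 1:])"
proof -
  obtain ls where ls: "length ls = n" "char_poly M = (\<Prod>a\<leftarrow>ls. [:-a, 1:])"
    using real_sym_char_poly_split[OF M sym] by blast
  define xs where "xs = rev (sort ls)"
  have "length xs = dim_row M" using ls M unfolding xs_def by simp
  moreover have "sorted_wrt (\<ge>) xs" unfolding xs_def sorted_wrt_rev by simp
  moreover have "(\<Prod>a\<leftarrow>xs. [:-a, 1:]) = (\<Prod>a\<leftarrow>ls. [:-a, 1:])"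
  proof -
    have "mset (map (\<lambda>a. [:-a, 1:]) xs) = mset (map (\<lambda>a. [:-a, 1:]) ls)" unfolding xs_def by simp
    then show ?thesis by (metis prod_mset_prod_list)
  qed
  ultimately have "\<exists>ls. length ls = dim_row M \<and> sorted_wrt (\<ge>) ls \<and>
      char_poly M = (\<Prod>a\<leftarrow>ls. [:-a, 1:])" using ls by metis
  from someI_ex[OF this] show ?thesis using M unfolding eigvals_desc_def by auto
qed


definition mtr :: "real mat \<Rightarrow> real" where "mtr A = (\<Sum>i<dim_row A. A $$ (i,i))"

lemma mtr_mult_expand:
  assumes A: "A \<in> carrier_mat n m" and B: "B \<in> carrier_mat m n"
  shows "mtr (A * B) = (\<Sum>i<n. \<Sum>j<m. A $$ (i,j) * B $$ (j,i))"
  unfolding mtr_def using A B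
  by (auto simp: scalar_prod_def atLeast0LessThan intro!: sum.cong)

lemma mtr_comm:
  assumes A: "A \<in> carrier_mat n m" and B: "B \<in> carrier_mat m n"
  shows "mtr (A * B) = mtr (B * A)"
  unfolding mtr_mult_expand[OF A B] mtr_mult_expand[OF B A]
  by (subst sum.swap) (simp add: mult.commute)

lemma eig_sums:
  fixes M :: "real mat"
  assumes M: "M \<in> carrier_mat n n" and len: "length ls = n"
    and cp: "char_poly M = (\<Prod>a\<leftarrow>ls. [:-a, 1:])"
  shows "sum_list ls = (\<Sum>i<n. M $$ (i,i))"
    and "sum_list (map (\<lambda>x. x^2) ls) = (\<Sum>i<n. \<Sum>j<n. M $$ (i,j) * M $$ (j,i))"
proof -
  obtain B P Q where sd: "schur_decomposition M ls = (B,P,Q)" by (cases "schur_decomposition M ls") auto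
  from schur_decomposition[OF M cp sd] have sim: "similar_mat_wit M B P Q"
    and ut: "upper_triangular B" and dg: "diag_mat B = ls" by auto
  from sim M have B: "B \<in> carrier_mat n n" and P: "P \<in> carrier_mat n n" and Q: "Q \<in> carrier_mat n n"
    and PQ: "P * Q = 1\<^sub>m n" and QP: "Q * P = 1\<^sub>m n" and MPBQ: "M = P * B * Q"
    unfolding similar_mat_wit_def Let_def by auto
  have lsi: "ls ! i = B $$ (i,i)" if "i < n" for i
    using dg that B unfolding diag_mat_def by auto
  have tr_sim: "mtr (P * X * Q) = mtr X" if X: "X \<in> carrier_mat n n" for X
  proof -
    have "mtr (P * X * Q) = mtr (Q * (P * X))"
      by (rule mtr_comm[of _ n n]) (use P Q X in auto)
    also have "Q * (P * X) = (Q * P) * X" using P Q X by (simp add: assoc_mult_mat)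
    also have "\<dots> = X" using QP X by simp
    finally show ?thesis .
  qed
  have trM: "mtr M = mtr B" unfolding MPBQ by (rule tr_sim[OF B])
  have MM: "M * M = P * (B * B) * Q"
  proof -
    have "M * M = P * B * (Q * P) * B * Q" unfolding MPBQ using P B Q
      by (simp add: assoc_mult_mat[of _ n n _ n _ n] mult_carrier_mat[of _ n n _ n])
    also have "\<dots> = P * (B * B) * Q" unfolding QP using P B Q
      by (simp add: assoc_mult_mat[of _ n n _ n _ n] mult_carrier_mat[of _ n n _ n])
    finally show ?thesis .
  qed
  have trMM: "mtr (M * M) = mtr (B * B)" unfolding MM by (rule tr_sim) (use B in auto)
  have BB: "B $$ (i,j) * B $$ (j,i) = (if i = j then (B $$ (i,i))^2 else 0)" if "i < n" "j < n" for i j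
    using ut B that unfolding upper_triangular_def
    by (cases i j rule: linorder_cases) (auto simp: power2_eq_square)
  show "sum_list ls = (\<Sum>i<n. M $$ (i,i))"
    using trM M B len unfolding mtr_def sum_list_sum_nth
    by (auto simp: lsi atLeast0LessThan)
  have "sum_list (map (\<lambda>x. x^2) ls) = (\<Sum>i<n. (B $$ (i,i))^2)"
    using len unfolding sum_list_sum_nth by (auto simp: lsi atLeast0LessThan)
  also have "\<dots> = mtr (B * B)" unfolding mtr_mult_expand[OF B B]
    by (intro sum.cong refl) (simp add: BB)
  also have "\<dots> = (\<Sum>i<n. \<Sum>j<n. M $$ (i,j) * M $$ (j,i))"
    unfolding trMM[symmetric] by (rule mtr_mult_expand[OF M M])
  finally show "sum_list (map (\<lambda>x. x^2) ls) = (\<Sum>i<n. \<Sum>j<n. M $$ (i,j) * M $$ (j,i))" .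
qed

lemma cs_sum:
  fixes x :: "nat \<Rightarrow> real"
  assumes "finite A"
  shows "(\<Sum>i\<in>A. x i)^2 \<le> real (card A) * (\<Sum>i\<in>A. (x i)^2)"
proof (cases "card A = 0")
  case True thus ?thesis using assms by simp
next
  case False
  define c where "c = real (card A)"
  define S where "S = (\<Sum>i\<in>A. x i)"
  define Q where "Q = (\<Sum>i\<in>A. (x i)^2)"
  have c: "c > 0" using False unfolding c_def by simp
  have "0 \<le> (\<Sum>i\<in>A. (c * x i - S)^2)" by (rule sum_nonneg) simp
  also have "\<dots> = (\<Sum>i\<in>A. c^2 * (x i)^2 - 2 * c * S * x i + S^2)"
    by (intro sum.cong refl) (simp add: power2_eq_square algebra_simps)
  also have "\<dots> = c^2 * Q - 2 * c * S * S + c * S^2"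
    unfolding sum.distrib sum_subtractf Q_def S_def c_def by (simp add: sum_distrib_left)
  also have "\<dots> = c * (c * Q - S^2)" by (simp add: power2_eq_square algebra_simps)
  finally have "0 \<le> c * Q - S^2" using c by (simp add: zero_le_mult_iff)
  thus ?thesis unfolding c_def S_def Q_def by simp
qed

lemma key_alg:
  fixes p q S R Q1 Q2 :: real
  assumes p: "p > 0" and q: "q > 0" and h1: "S^2 \<le> p * Q1" and h2: "R^2 \<le> q * Q2"
  shows "(S - p * (S + R) / (p + q))^2 \<le> p * q / (p + q) * ((Q1 + Q2) - (S + R)^2 / (p + q))"
proof -
  have n: "p + q > 0" using p q by simp
  have e1: "0 \<le> q * (p + q) * (p * Q1 - S^2)" using h1 p q by simp
  have e2: "0 \<le> p * (p + q) * (q * Q2 - R^2)" using h2 p q by simp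
  have poly: "(q * S - p * R)^2 \<le> p * q * ((p + q) * (Q1 + Q2) - (S + R)^2)"
  proof -
    have "p * q * ((p + q) * (Q1 + Q2) - (S + R)^2) - (q * S - p * R)^2
          = q * (p + q) * (p * Q1 - S^2) + p * (p + q) * (q * Q2 - R^2)"
      by (simp add: power2_eq_square algebra_simps)
    thus ?thesis using e1 e2 by linarith
  qed
  have l: "S - p * (S + R) / (p + q) = (q * S - p * R) / (p + q)"
    using n by (simp add: field_simps)
  have r: "p * q / (p + q) * ((Q1 + Q2) - (S + R)^2 / (p + q))
        = p * q * ((p + q) * (Q1 + Q2) - (S + R)^2) / (p + q)^2"
    using n by (simp add: field_simps power2_eq_square)
  show ?thesis unfolding l r power_divide
    by (rule divide_right_mono[OF poly]) simp
qed

lemma topk_bound: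
  fixes x :: "nat \<Rightarrow> real"
  assumes k: "0 < k" "k < n"
  shows "(\<Sum>i<k. x i) \<le> real k * (\<Sum>i<n. x i) / real n
     + sqrt (real k * (real n - real k) / real n * ((\<Sum>i<n. (x i)^2) - (\<Sum>i<n. x i)^2 / real n))"
proof -
  define S where "S = (\<Sum>i<k. x i)"
  define R where "R = (\<Sum>i\<in>{k..<n}. x i)"
  define Q1 where "Q1 = (\<Sum>i<k. (x i)^2)"
  define Q2 where "Q2 = (\<Sum>i\<in>{k..<n}. (x i)^2)"
  have split: "(\<Sum>i<n. f i) = (\<Sum>i<k. f i) + (\<Sum>i\<in>{k..<n}. f i)" for f :: "nat \<Rightarrow> real"
    using k by (metis less_imp_le_nat lessThan_atLeast0 sum.atLeastLessThan_concat)
  have T: "(\<Sum>i<n. x i) = S + R" unfolding S_def R_def by (rule split)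
  have Q: "(\<Sum>i<n. (x i)^2) = Q1 + Q2" unfolding Q1_def Q2_def by (rule split)
  have h1: "S^2 \<le> real k * Q1" unfolding S_def Q1_def using cs_sum[of "{..<k}" x] by simp
  have h2: "R^2 \<le> (real n - real k) * Q2" unfolding R_def Q2_def using cs_sum[of "{k..<n}" x] k
    by (simp add: of_nat_diff)
  have nk: "real n = real k + (real n - real k)" by simp
  have main: "(S - real k * (S + R) / real n)^2 \<le>
     real k * (real n - real k) / real n * ((Q1 + Q2) - (S + R)^2 / real n)"
    using key_alg[of "real k" "real n - real k" S Q1 R Q2] h1 h2 k by simp
  have "S - real k * (S + R) / real n \<le> sqrt (real k * (real n - real k) / real n * ((Q1 + Q2) - (S + R)^2 / real n))"
    by (rule real_le_rsqrt[OF main])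
  thus ?thesis unfolding T Q S_def by simp
qed

lemma deg_sum: "real (degree n E i) = (\<Sum>j<n. if E i j then 1 else 0)"
proof -
  have "{j. j < n \<and> E i j} = {j\<in>{..<n}. E i j}" by auto
  hence "real (degree n E i) = (\<Sum>j\<in>{j\<in>{..<n}. E i j}. 1)" unfolding degree_def by simp
  also have "\<dots> = (\<Sum>j<n. if E i j then 1 else 0)" by (rule sum.inter_filter) simp
  finally show ?thesis .
qed

lemma handshake:
  assumes g: "simple_graph n E"
  shows "(\<Sum>i<n. real (degree n E i)) = 2 * real (num_edges n E)"
proof -
  have sym: "E i j = E j i" if "i < n" "j < n" for i j using g that unfolding simple_graph_def by blast
  have irr: "\<not> E i i" if "i < n" for i using g that unfolding simple_graph_def by blast
  define f :: "nat \<Rightarrow> nat \<Rightarrow> real" where "f i j = (if i < j \<and> E i j then 1 else 0)" for i j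
  have m: "real (num_edges n E) = (\<Sum>i<n. \<Sum>j<n. f i j)"
  proof -
    have "{(i, j). i < j \<and> j < n \<and> E i j} = Sigma {..<n} (\<lambda>i. {j\<in>{..<n}. i < j \<and> E i j})" by auto
    hence "num_edges n E = (\<Sum>i<n. card {j\<in>{..<n}. i < j \<and> E i j})"
      unfolding num_edges_def by simp
    hence "real (num_edges n E) = (\<Sum>i<n. (\<Sum>j\<in>{j\<in>{..<n}. i < j \<and> E i j}. 1))" by simp
    also have "\<dots> = (\<Sum>i<n. \<Sum>j<n. f i j)" unfolding f_def
      by (intro sum.cong refl sum.inter_filter) simp
    finally show ?thesis .
  qed
  have "(\<Sum>i<n. real (degree n E i)) = (\<Sum>i<n. \<Sum>j<n. f i j + f j i)"
    unfolding deg_sum f_def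
    by (intro sum.cong refl) (auto simp: sym irr dest: irr)
  also have "\<dots> = (\<Sum>i<n. \<Sum>j<n. f i j) + (\<Sum>i<n. \<Sum>j<n. f j i)" by (simp add: sum.distrib)
  also have "(\<Sum>i<n. \<Sum>j<n. f j i) = (\<Sum>i<n. \<Sum>j<n. f i j)" by (rule sum.swap)
  finally show ?thesis unfolding m by simp
qed

lemma A_alpha_carrier: "A_alpha \<alpha> n E \<in> carrier_mat n n"
  unfolding A_alpha_def deg_mat_def adj_mat_def by auto

lemma A_alpha_index:
  assumes "i < n" "j < n"
  shows "A_alpha \<alpha> n E $$ (i,j) = (if i = j then \<alpha> * real (degree n E i) else 0) + (1 - \<alpha>) * (if E i j then 1 else 0)"
  unfolding A_alpha_def deg_mat_def adj_mat_def using assms by auto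

lemma A_alpha_sym:
  assumes g: "simple_graph n E" and "i < n" "j < n"
  shows "A_alpha \<alpha> n E $$ (i,j) = A_alpha \<alpha> n E $$ (j,i)"
  using assms unfolding A_alpha_index[OF assms(2,3)] A_alpha_index[OF assms(3,2)] simple_graph_def
  by auto

lemma A_alpha_trace:
  assumes g: "simple_graph n E"
  shows "(\<Sum>i<n. A_alpha \<alpha> n E $$ (i,i)) = \<alpha> * (\<Sum>i<n. real (degree n E i))"
  using g unfolding simple_graph_def by (auto simp: A_alpha_index sum_distrib_left intro!: sum.cong)

lemma A_alpha_trace2:
  assumes g: "simple_graph n E"
  shows "(\<Sum>i<n. \<Sum>j<n. A_alpha \<alpha> n E $$ (i,j) * A_alpha \<alpha> n E $$ (j,i))
    = \<alpha>^2 * (\<Sum>i<n. (real (degree n E i))^2) + (1 - \<alpha>)^2 * (\<Sum>i<n. real (degree n E i))"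
proof -
  have irr: "\<not> E i i" if "i < n" for i using g that unfolding simple_graph_def by blast
  have "(\<Sum>i<n. \<Sum>j<n. A_alpha \<alpha> n E $$ (i,j) * A_alpha \<alpha> n E $$ (j,i))
     = (\<Sum>i<n. \<Sum>j<n. (if i = j then \<alpha>^2 * (real (degree n E i))^2 else 0) + (1 - \<alpha>)^2 * (if E i j then 1 else 0))"
  proof (intro sum.cong refl)
    fix i j assume i: "i \<in> {..<n}" and j: "j \<in> {..<n}"
    hence ij: "i < n" "j < n" by auto
    show "A_alpha \<alpha> n E $$ (i,j) * A_alpha \<alpha> n E $$ (j,i) = (if i = j then \<alpha>^2 * (real (degree n E i))^2 else 0) + (1 - \<alpha>)^2 * (if E i j then 1 else 0)"
      unfolding A_alpha_sym[OF g ij(2,1)] A_alpha_index[OF ij]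
      using irr[OF ij(1)] by (auto simp: power2_eq_square)
  qed
  also have "\<dots> = \<alpha>^2 * (\<Sum>i<n. (real (degree n E i))^2) + (1 - \<alpha>)^2 * (\<Sum>i<n. real (degree n E i))"
    unfolding deg_sum by (simp add: sum.distrib sum_distrib_left)
  finally show ?thesis .
qed

lemma degree_var_bound:
  assumes n: "n > 0"
  shows "(\<Sum>i<n. (real (degree n E i))^2) - (\<Sum>i<n. real (degree n E i))^2 / real n
     \<le> real n / 4 * (real (max_degree n E) - real (min_degree n E))^2"
proof -
  define d where "d i = real (degree n E i)" for i
  define Dl where "Dl = real (min_degree n E)"
  define Du where "Du = real (max_degree n E)"
  define c where "c = (Du + Dl) / 2"
  define T where "T = (\<Sum>i<n. d i)"
  have fin: "finite (degree n E ` {0..<n})" and ne: "degree n E ` {0..<n} \<noteq> {}" using n by auto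
  have bnd: "Dl \<le> d i \<and> d i \<le> Du" if "i < n" for i
    unfolding Dl_def Du_def d_def min_degree_def max_degree_def using that fin
    by (auto intro!: Min_le Max_ge)
  have "(\<Sum>i<n. (d i)^2) - T^2 / real n \<le> (\<Sum>i<n. (d i - c)^2)"
  proof -
    have "(\<Sum>i<n. (d i - c)^2) = (\<Sum>i<n. (d i)^2 - 2 * c * d i + c^2)"
      by (intro sum.cong refl) (simp add: power2_eq_square algebra_simps)
    also have "\<dots> = (\<Sum>i<n. (d i)^2) - 2 * c * T + real n * c^2"
      unfolding T_def by (simp add: sum.distrib sum_subtractf sum_distrib_left)
    finally have eq: "(\<Sum>i<n. (d i - c)^2) = (\<Sum>i<n. (d i)^2) - 2 * c * T + real n * c^2" .
    have "0 \<le> (real n * c - T)^2 / real n" by simp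
    also have "(real n * c - T)^2 / real n = real n * c^2 - 2 * c * T + T^2 / real n"
      using n by (simp add: field_simps power2_eq_square)
    finally show ?thesis unfolding eq by simp
  qed
  also have "\<dots> \<le> (\<Sum>i<n. ((Du - Dl) / 2)^2)"
  proof (rule sum_mono)
    fix i assume "i \<in> {..<n}"
    hence b: "Dl \<le> d i" "d i \<le> Du" using bnd by auto
    have "\<bar>d i - c\<bar> \<le> (Du - Dl) / 2" using b unfolding c_def abs_le_iff by (simp add: field_simps)
    thus "(d i - c)^2 \<le> ((Du - Dl) / 2)^2"
      by (metis abs_le_square_iff abs_of_nonneg abs_ge_zero order_trans)
  qed
  also have "\<dots> = real n / 4 * (Du - Dl)^2" by (simp add: power2_eq_square)
  finally show ?thesis unfolding d_def T_def Du_def Dl_def .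
qed

theorem corollary3p1:
  fixes \<alpha> :: real and n k :: nat and E :: "nat \<Rightarrow> nat \<Rightarrow> bool"
  assumes "simple_graph n E"
    and "1/2 \<le> \<alpha>" and "\<alpha> < 1"
    and "1 \<le> k" and "k \<le> n - 1"
  shows "S_k k (A_alpha \<alpha> n E) \<le>
    2 * \<alpha> * k * num_edges n E / n
    + sqrt (k * (n - k) / n *
        (2 * num_edges n E * (1 - \<alpha>)^2
         + \<alpha>^2 * n / 4 * (real (max_degree n E) - real (min_degree n E))^2))"
proof -
  note g = assms(1)
  have k0: "0 < k" and kn: "k < n" using assms(4,5) by auto
  let ?M = "A_alpha \<alpha> n E"
  have Mc: "?M \<in> carrier_mat n n" by (rule A_alpha_carrier)
  have sym: "\<And>i j. i < n \<Longrightarrow> j < n \<Longrightarrow> ?M $$ (i,j) = ?M $$ (j,i)"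
    by (rule A_alpha_sym[OF g])
  define ls where "ls = eigvals_desc ?M"
  have len: "length ls = n" and cp: "char_poly ?M = (\<Prod>a\<leftarrow>ls. [:-a, 1:])"
    using eigvals_desc_props[OF Mc sym] unfolding ls_def by auto
  note es = eig_sums[OF Mc len cp]
  define x where "x i = ls ! i" for i
  define m where "m = real (num_edges n E)"
  define D where "D = (\<Sum>i<n. real (degree n E i))"
  define D2 where "D2 = (\<Sum>i<n. (real (degree n E i))^2)"
  define Dd where "Dd = real (max_degree n E) - real (min_degree n E)"
  have Sk: "S_k k ?M = (\<Sum>i<k. x i)"
    unfolding S_k_def ls_def[symmetric] sum_list_sum_nth x_def using len kn
    by (auto simp: atLeast0LessThan intro!: sum.cong)
  have T: "(\<Sum>i<n. x i) = \<alpha> * D"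
    using es(1) A_alpha_trace[OF g] len unfolding sum_list_sum_nth x_def D_def
    by (simp add: atLeast0LessThan)
  have Q: "(\<Sum>i<n. (x i)^2) = \<alpha>^2 * D2 + (1 - \<alpha>)^2 * D"
    using es(2) A_alpha_trace2[OF g] len unfolding sum_list_sum_nth x_def D_def D2_def
    by (simp add: atLeast0LessThan)
  have D: "D = 2 * m" unfolding D_def m_def by (rule handshake[OF g])
  have var: "D2 - D^2 / real n \<le> real n / 4 * Dd^2"
    unfolding D2_def D_def Dd_def by (rule degree_var_bound) (use kn in simp)
  note main = topk_bound[OF k0 kn, of x]
  have inner: "(\<Sum>i<n. (x i)^2) - (\<Sum>i<n. x i)^2 / real n
       \<le> 2 * m * (1 - \<alpha>)^2 + \<alpha>^2 * real n / 4 * Dd^2"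
  proof -
    have e: "(\<Sum>i<n. (x i)^2) - (\<Sum>i<n. x i)^2 / real n = \<alpha>^2 * (D2 - D^2 / real n) + (1 - \<alpha>)^2 * D"
      unfolding T Q by (simp add: power_mult_distrib right_diff_distrib)
    have h: "\<alpha>^2 * (D2 - D^2 / real n) \<le> \<alpha>^2 * (real n / 4 * Dd^2)"
      by (rule mult_left_mono[OF var]) simp
    have e2: "\<alpha>^2 * (real n / 4 * Dd^2) = \<alpha>^2 * real n / 4 * Dd^2" by simp
    have e3: "(1 - \<alpha>)^2 * D = 2 * m * (1 - \<alpha>)^2" unfolding D by simp
    show ?thesis unfolding e using h e2 e3 by linarith
  qed
  have kk: "0 \<le> real k * (real n - real k) / real n" using kn
    by (intro divide_nonneg_nonneg mult_nonneg_nonneg) auto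
  have sq: "sqrt (real k * (real n - real k) / real n * ((\<Sum>i<n. (x i)^2) - (\<Sum>i<n. x i)^2 / real n))
     \<le> sqrt (real k * (real n - real k) / real n * (2 * m * (1 - \<alpha>)^2 + \<alpha>^2 * real n / 4 * Dd^2))"
    by (rule real_sqrt_le_mono, rule mult_left_mono[OF inner kk])
  have e4: "real k * (\<Sum>i<n. x i) / real n = 2 * \<alpha> * real k * m / real n"
    unfolding T D by (simp add: mult_ac)
  have fin: "S_k k ?M \<le> 2 * \<alpha> * real k * m / real n
     + sqrt (real k * (real n - real k) / real n * (2 * m * (1 - \<alpha>)^2 + \<alpha>^2 * real n / 4 * Dd^2))"
    using main sq unfolding Sk e4 by linarith
  have e5: "real (k * (n - k)) = real k * (real n - real k)" using kn by (simp add: of_nat_diff)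
  have e6: "real (2 * num_edges n E) = 2 * real (num_edges n E)" by simp
  show ?thesis using fin unfolding e5 e6 m_def Dd_def by simp
qed

end
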